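(* Let $f_0\in\mathbb{R}$, $g\in\mathbb{R}^n$, $H$ a symmetric $n\times n$ matrix, $\sigma>0$, and $m(s)=f_0+\langle g,s\rangle+\frac12\langle Hs,s\rangle+\frac16\sigma\|s\|^3$. Suppose $s\in\mathbb{R}^n$ and $\beta\ge0$ satisfy $m(0)-m(s)\ge\beta$. Then $$\|s\|\le\frac{\frac12\|H\|_{r,2}+\sqrt{\|H\|_{r,2}^2+\frac23\sigma\|g\|_{r,1}}}{\frac13\sigma}.$$ Moreover, if $\beta>0$, then: if $\lambda_r[H]<0$, $$\|s\|\ge\frac{\sqrt{\|g\|_{r,1}^2+2\beta|\lambda_r[H]|}-\|g\|_{r,1}}{|\lambda_r[H]|};$$ and if $\lambda_r[H]\ge0$, then $g\neq0$ and $\|s\|\ge\beta/\|g\|_{r,1}$.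
   Context: $\|\cdot\|$ is an arbitrary (possibly non-smooth) norm on $\mathbb{R}^n$, $\langle\cdot,\cdot\rangle$ the Euclidean inner product, $\|v\|_{r,1}=\max_{\|s\|=1}|\langle v,s\rangle|$ the dual norm, and for a symmetric matrix $H$, $\|H\|_{r,2}=\max_{\|v\|=1}|\langle Hv,v\rangle|$ and $\lambda_r[H]=\min_{\|v\|=1}\langle Hv,v\rangle$. *)

theory Defs
  imports "HOL-Analysis.Analysis"
begin

definition is_norm :: "(real^'n \<Rightarrow> real) \<Rightarrow> bool" where
  "is_norm N \<longleftrightarrow> (\<forall>x. N x = 0 \<longleftrightarrow> x = 0) \<and> (\<forall>c x. N (c *\<^sub>R x) = \<bar>c\<bar> * N x)
     \<and> (\<forall>x y. N (x + y) \<le> N x + N y)"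

definition dual_norm :: "(real^'n \<Rightarrow> real) \<Rightarrow> real^'n \<Rightarrow> real" where
  "dual_norm N v = Sup {\<bar>v \<bullet> s\<bar> | s. N s = 1}"

definition rnorm2 :: "(real^'n \<Rightarrow> real) \<Rightarrow> real^'n^'n \<Rightarrow> real" where
  "rnorm2 N H = Sup {\<bar>(H *v v) \<bullet> v\<bar> | v. N v = 1}"

definition lambda_r :: "(real^'n \<Rightarrow> real) \<Rightarrow> real^'n^'n \<Rightarrow> real" where
  "lambda_r N H = Inf {(H *v v) \<bullet> v | v. N v = 1}"

definition cubic_model :: "(real^'n \<Rightarrow> real) \<Rightarrow> real \<Rightarrow> real^'n \<Rightarrow> real^'n^'n \<Rightarrow> real \<Rightarrow> real^'n \<Rightarrow> real" where
  "cubic_model N f0 g H \<sigma> s = f0 + g \<bullet> s + (1/2) * ((H *v s) \<bullet> s) + (1/6) * \<sigma> * (N s) ^ 3"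

end

theory Submission
  imports Defs
begin

lemma isn_0: "is_norm N \<Longrightarrow> N 0 = 0" by (simp add: is_norm_def)
lemma isn_nonneg: assumes "is_norm N" shows "N x \<ge> 0"
proof -
  have "N (x + (-1) *\<^sub>R x) \<le> N x + N ((-1) *\<^sub>R x)" using assms unfolding is_norm_def by blast
  moreover have "N ((-1) *\<^sub>R x) = \<bar>-1\<bar> * N x" using assms unfolding is_norm_def by blast
  ultimately show ?thesis using isn_0[OF assms] by simp
qed
lemma isn_sum: assumes "is_norm N" shows "N (sum f A) \<le> (\<Sum>i\<in>A. N (f i))"
proof (induction A rule: infinite_finite_induct)
  case (infinite A) then show ?case using isn_0[OF assms] by simp
next
  case empty then show ?case using isn_0[OF assms] by simp
next
  case (insert x F)
  have "N (f x + sum f F) \<le> N (f x) + N (sum f F)" using assms by (simp add: is_norm_def)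
  then show ?case using insert by simp
qed
lemma isn_upper: assumes "is_norm N" shows "\<exists>C\<ge>0. \<forall>x::real^'n. N x \<le> C * norm x"
proof -
  define C where "C = (\<Sum>i\<in>UNIV. N (axis i (1::real) :: real^'n))"
  have C0: "C \<ge> 0" unfolding C_def by (intro sum_nonneg isn_nonneg[OF assms])
  have "N x \<le> C * norm x" for x :: "real^'n"
  proof -
    have "N x = N (\<Sum>i\<in>UNIV. (x$i) *\<^sub>R axis i 1)"
      using basis_expansion[of x] by (simp add: scalar_mult_eq_scaleR)
    also have "\<dots> \<le> (\<Sum>i\<in>UNIV. N ((x$i) *\<^sub>R axis i 1))" by (rule isn_sum[OF assms])
    also have "\<dots> = (\<Sum>i\<in>UNIV. \<bar>x$i\<bar> * N (axis i 1))" using assms by (simp add: is_norm_def)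
    also have "\<dots> \<le> (\<Sum>i\<in>UNIV. norm x * N (axis i 1))"
      by (intro sum_mono mult_right_mono component_le_norm_cart isn_nonneg[OF assms])
    also have "\<dots> = C * norm x" by (simp add: C_def sum_distrib_left mult.commute)
    finally show ?thesis .
  qed
  with C0 show ?thesis by blast
qed
lemma isn_lower: assumes "is_norm N" shows "\<exists>m>0. \<forall>x::real^'n. m * norm x \<le> N x"
proof -
  obtain C where C: "C \<ge> 0" "\<forall>x::real^'n. N x \<le> C * norm x" using isn_upper[OF assms] by blast
  have lip: "\<bar>N x - N y\<bar> \<le> C * dist x y" for x y :: "real^'n"
  proof -
    have a: "N (u + v) \<le> N u + N v" for u v using assms by (simp add: is_norm_def)
    have b: "N (y - x) = N (x - y)"
    proof -
      have "N ((-1) *\<^sub>R (x - y)) = \<bar>-1\<bar> * N (x - y)" using assms unfolding is_norm_def by blast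
      then show ?thesis by simp
    qed
    have "N x \<le> N (x - y) + N y" using a[of "x-y" y] by simp
    moreover have "N y \<le> N (y - x) + N x" using a[of "y-x" x] by simp
    ultimately have "\<bar>N x - N y\<bar> \<le> N (x - y)" using b by linarith
    also have "\<dots> \<le> C * dist x y" using C by (simp add: dist_norm)
    finally show ?thesis .
  qed
  have cont: "continuous_on (sphere (0::real^'n) 1) N"
    unfolding continuous_on_iff
  proof (intro ballI allI impI)
    fix x and e :: real assume "e > 0"
    show "\<exists>d>0. \<forall>x'\<in>sphere 0 1. dist x' x < d \<longrightarrow> dist (N x') (N x) < e"
    proof (intro exI[of _ "e/(C+1)"] conjI ballI impI)
      show "e/(C+1) > 0" using \<open>e>0\<close> C by simp
      fix x' assume "dist x' x < e/(C+1)"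
      then have "(C+1) * dist x' x < e" using C by (simp add: field_simps)
      moreover have "dist (N x') (N x) \<le> C * dist x' x" using lip[of x' x] by (simp add: dist_real_def)
      moreover have "C * dist x' x \<le> (C+1) * dist x' x" by (simp add: distrib_right)
      ultimately show "dist (N x') (N x) < e" by linarith
    qed
  qed
  have ne: "sphere (0::real^'n) 1 \<noteq> {}" by simp
  obtain x0 where x0: "x0 \<in> sphere (0::real^'n) 1" "\<forall>y\<in>sphere 0 1. N x0 \<le> N y"
    using continuous_attains_inf[OF compact_sphere ne cont] by blast
  have "x0 \<noteq> 0" using x0 by auto
  then have m: "N x0 > 0" using assms isn_nonneg[OF assms, of x0] unfolding is_norm_def
    by (metis order_le_less)
  have "N x0 * norm x \<le> N x" for x :: "real^'n"
  proof (cases "x = 0")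
    case True then show ?thesis using isn_0[OF assms] by simp
  next
    case False
    then have "(1/norm x) *\<^sub>R x \<in> sphere 0 1" by simp
    then have "N x0 \<le> N ((1/norm x) *\<^sub>R x)" using x0 by blast
    also have "\<dots> = N x / norm x" using assms by (simp add: is_norm_def)
    finally show ?thesis using False by (simp add: field_simps)
  qed
  with m show ?thesis by blast
qed

lemma bdd_fun:
  fixes f :: "real^'n \<Rightarrow> real"
  assumes "is_norm N" "continuous_on UNIV f"
  shows "bdd_above {f v | v. N v = 1} \<and> bdd_below {f v | v. N v = 1}"
proof -
  obtain m where m: "m > 0" "\<forall>x::real^'n. m * norm x \<le> N x" using isn_lower[OF assms(1)] by blast
  have sub: "{f v | v. N v = 1} \<subseteq> f ` cball 0 (1/m)"
  proof
    fix y assume "y \<in> {f v | v. N v = 1}"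
    then obtain v where v: "y = f v" "N v = 1" by blast
    have "m * norm v \<le> 1" using m v by metis
    then have "norm v \<le> 1/m" using m by (simp add: field_simps)
    then show "y \<in> f ` cball 0 (1/m)" using v by auto
  qed
  have "compact (f ` cball 0 (1/m))"
    by (intro compact_continuous_image continuous_on_subset[OF assms(2)]) auto
  then have "bounded (f ` cball 0 (1/m))" by (rule compact_imp_bounded)
  then have "bdd_above (f ` cball 0 (1/m)) \<and> bdd_below (f ` cball 0 (1/m))"
    by (simp add: bounded_imp_bdd_above bounded_imp_bdd_below)
  then show ?thesis using sub bdd_above_mono bdd_below_mono by meson
qed

lemma exists_unit: assumes "is_norm N" shows "\<exists>u::real^'n. N u = 1"
proof -
  obtain i :: 'n where True by blast
  let ?e = "axis i (1::real) :: real^'n"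
  have "?e \<noteq> 0" by (simp add: axis_eq_0_iff)
  then have p: "N ?e > 0" using assms isn_nonneg[OF assms, of ?e] unfolding is_norm_def by (metis order_le_less)
  have "N ((1 / N ?e) *\<^sub>R ?e) = \<bar>1 / N ?e\<bar> * N ?e" using assms unfolding is_norm_def by blast
  then have "N ((1 / N ?e) *\<^sub>R ?e) = 1" using p by simp
  then show ?thesis by blast
qed

lemma scale_unit: assumes "is_norm N" "s \<noteq> 0"
  shows "N ((1/N s) *\<^sub>R s) = 1 \<and> s = N s *\<^sub>R ((1/N s) *\<^sub>R s) \<and> N s > 0"
proof -
  have p: "N s > 0" using assms isn_nonneg[OF assms(1), of s] unfolding is_norm_def by (metis order_le_less)
  have "N ((1 / N s) *\<^sub>R s) = \<bar>1 / N s\<bar> * N s" using assms unfolding is_norm_def by blast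
  then show ?thesis using p by simp
qed

lemma dual_bound: assumes "is_norm N"
  shows "\<bar>g \<bullet> s\<bar> \<le> dual_norm N g * N s \<and> dual_norm N g \<ge> 0"
proof -
  have bdd: "bdd_above {\<bar>g \<bullet> v\<bar> | v. N v = 1}"
    proof -
    have "continuous_on UNIV (\<lambda>v. \<bar>g \<bullet> v\<bar>)" by (intro continuous_intros)
    from bdd_fun[OF assms this] show ?thesis by simp
  qed
  have up: "\<bar>g \<bullet> u\<bar> \<le> dual_norm N g" if "N u = 1" for u
    unfolding dual_norm_def by (rule cSup_upper[OF _ bdd]) (use that in blast)
  obtain u where "N u = 1" using exists_unit[OF assms] by blast
  then have d0: "dual_norm N g \<ge> 0" using up[of u] by linarith
  have "\<bar>g \<bullet> s\<bar> \<le> dual_norm N g * N s"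
  proof (cases "s = 0")
    case True then show ?thesis using isn_0[OF assms] by simp
  next
    case False
    define u where "u = (1/N s) *\<^sub>R s"
    have u: "N u = 1" "s = N s *\<^sub>R u" "N s > 0" using scale_unit[OF assms False] u_def by auto
    have "\<bar>g \<bullet> s\<bar> = N s * \<bar>g \<bullet> u\<bar>" using u(3) by (subst u(2)) (simp add: abs_mult)
    also have "\<dots> \<le> N s * dual_norm N g" using up[OF u(1)] u(3) by simp
    finally show ?thesis by (simp add: mult.commute)
  qed
  with d0 show ?thesis by blast
qed

lemma quad_scale: fixes H :: "real^'n^'n" shows "(H *v (c *\<^sub>R u)) \<bullet> (c *\<^sub>R u) = c^2 * ((H *v u) \<bullet> u)"
  by (simp add: matrix_vector_mult_scaleR power2_eq_square inner_scaleR_left inner_scaleR_right)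

lemma rnorm_bound: assumes "is_norm N"
  shows "\<bar>(H *v s) \<bullet> s\<bar> \<le> rnorm2 N H * (N s)^2 \<and> rnorm2 N H \<ge> 0"
proof -
  have bdd: "bdd_above {\<bar>(H *v v) \<bullet> v\<bar> | v. N v = 1}"
    proof -
    have "continuous_on UNIV (\<lambda>v. \<bar>(H *v v) \<bullet> v\<bar>)" by (intro continuous_intros)
    from bdd_fun[OF assms this] show ?thesis by simp
  qed
  have up: "\<bar>(H *v u) \<bullet> u\<bar> \<le> rnorm2 N H" if "N u = 1" for u
    unfolding rnorm2_def by (rule cSup_upper[OF _ bdd]) (use that in blast)
  obtain u where "N u = 1" using exists_unit[OF assms] by blast
  then have d0: "rnorm2 N H \<ge> 0" using up[of u] by linarith
  have "\<bar>(H *v s) \<bullet> s\<bar> \<le> rnorm2 N H * (N s)^2"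
  proof (cases "s = 0")
    case True then show ?thesis using isn_0[OF assms] by simp
  next
    case False
    define u where "u = (1/N s) *\<^sub>R s"
    have u: "N u = 1" "s = N s *\<^sub>R u" "N s > 0" using scale_unit[OF assms False] u_def by auto
    have "\<bar>(H *v s) \<bullet> s\<bar> = (N s)^2 * \<bar>(H *v u) \<bullet> u\<bar>"
      using quad_scale[of H "N s" u] u(2) by (metis abs_mult abs_power2 power2_abs)
    also have "\<dots> \<le> (N s)^2 * rnorm2 N H" using up[OF u(1)] u(3) by simp
    finally show ?thesis by (simp add: mult.commute)
  qed
  with d0 show ?thesis by blast
qed

lemma lambda_bound: assumes "is_norm N"
  shows "lambda_r N H * (N s)^2 \<le> (H *v s) \<bullet> s"
proof -
  have bdd: "bdd_below {(H *v v) \<bullet> v | v. N v = 1}"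
    proof -
    have "continuous_on UNIV (\<lambda>v. (H *v v) \<bullet> v)" by (intro continuous_intros)
    from bdd_fun[OF assms this] show ?thesis by simp
  qed
  have lo: "lambda_r N H \<le> (H *v u) \<bullet> u" if "N u = 1" for u
    unfolding lambda_r_def by (rule cInf_lower[OF _ bdd]) (use that in blast)
  show ?thesis
  proof (cases "s = 0")
    case True then show ?thesis using isn_0[OF assms] by simp
  next
    case False
    define u where "u = (1/N s) *\<^sub>R s"
    have u: "N u = 1" "s = N s *\<^sub>R u" "N s > 0" using scale_unit[OF assms False] u_def by auto
    have "(H *v s) \<bullet> s = (N s)^2 * ((H *v u) \<bullet> u)" using quad_scale[of H "N s" u] u(2) by metis
    moreover have "(N s)^2 * lambda_r N H \<le> (N s)^2 * ((H *v u) \<bullet> u)" using lo[OF u(1)] by (simp add: mult_left_mono)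
    ultimately show ?thesis by (simp add: mult.commute)
  qed
qed

lemma arith1:
  fixes \<sigma> r d R :: real
  assumes "\<sigma> > 0" "r \<ge> 0" "d \<ge> 0" "R \<ge> 0" "\<sigma>/6 * r^3 \<le> d * r + R/2 * r^2"
  shows "r \<le> ((1/2) * R + sqrt (R^2 + (2/3) * \<sigma> * d)) / ((1/3) * \<sigma>)"
proof -
  define S where "S = sqrt (R^2 + (2/3) * \<sigma> * d)"
  have S0: "S \<ge> 0" and S2: "S^2 = R^2 + (2/3) * \<sigma> * d" using assms unfolding S_def by auto
  have "(1/3) * \<sigma> * r - R/2 \<le> S"
  proof (cases "r = 0")
    case True then show ?thesis using S0 assms by simp
  next
    case False
    then have rp: "r > 0" using assms by simp
    have "r * (\<sigma>/6 * r^2) \<le> r * (d + R/2 * r)" using assms(5) by (simp add: algebra_simps power3_eq_cube power2_eq_square)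
    then have h: "\<sigma>/6 * r^2 \<le> d + R/2 * r" using rp by simp
    show ?thesis
    proof (rule ccontr)
      assume "\<not> ?thesis"
      then have c: "(1/3) * \<sigma> * r - R/2 > S" by simp
      then have "((1/3) * \<sigma> * r - R/2)^2 > S^2" using S0 by (simp add: power_strict_mono)
      then have "((1/3) * \<sigma> * r - R/2)^2 > R^2 + (2/3) * \<sigma> * d" using S2 by simp
      moreover have "(\<sigma>/3) * (\<sigma>/6 * r^2) \<le> (\<sigma>/3) * (d + R/2 * r)" using h assms(1) by simp
      moreover have "R * R \<ge> 0" by simp
      ultimately show False using assms(1) unfolding power2_eq_square
        by (simp add: algebra_simps)
    qed
  qed
  then show ?thesis using assms(1) unfolding S_def by (simp add: field_simps)
qed

lemma arith2:
  fixes L r d \<beta> :: real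
  assumes "L > 0" "r \<ge> 0" "d \<ge> 0" "\<beta> \<le> d * r + L/2 * r^2"
  shows "r \<ge> (sqrt (d^2 + 2 * \<beta> * L) - d) / L"
proof -
  have "sqrt (d^2 + 2 * \<beta> * L) \<le> L * r + d"
  proof (rule real_le_lsqrt)
    show "0 \<le> L * r + d" using assms by simp
    have "L * \<beta> \<le> L * (d * r + L/2 * r^2)" using assms by simp
    then show "d^2 + 2 * \<beta> * L \<le> (L * r + d)^2" by (simp add: power2_eq_square algebra_simps)
  qed
  then show ?thesis using assms(1) by (simp add: field_simps)
qed
theorem lemma5p4:
  fixes N :: "real^'n \<Rightarrow> real" and f0 :: real and g s :: "real^'n"
    and H :: "real^'n^'n" and \<sigma> \<beta> :: real
  assumes "is_norm N"
    and "transpose H = H"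
    and "\<sigma> > 0"
    and "\<beta> \<ge> 0"
    and "cubic_model N f0 g H \<sigma> 0 - cubic_model N f0 g H \<sigma> s \<ge> \<beta>"
  shows "N s \<le> ((1/2) * rnorm2 N H + sqrt ((rnorm2 N H)^2 + (2/3) * \<sigma> * dual_norm N g))
                 / ((1/3) * \<sigma>)
     \<and> (\<beta> > 0 \<longrightarrow>
          (lambda_r N H < 0 \<longrightarrow>
             N s \<ge> (sqrt ((dual_norm N g)^2 + 2 * \<beta> * \<bar>lambda_r N H\<bar>) - dual_norm N g)
                    / \<bar>lambda_r N H\<bar>)
        \<and> (lambda_r N H \<ge> 0 \<longrightarrow> g \<noteq> 0 \<and> N s \<ge> \<beta> / dual_norm N g))"
proof -
  define r where "r = N s"
  define d where "d = dual_norm N g"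
  define R where "R = rnorm2 N H"
  define L where "L = lambda_r N H"
  define q where "q = (H *v s) \<bullet> s"
  have r0: "r \<ge> 0" unfolding r_def by (rule isn_nonneg[OF assms(1)])
  have key: "\<beta> \<le> - (g \<bullet> s) - q/2 - \<sigma>/6 * r^3"
    using assms(5) isn_0[OF assms(1)] unfolding cubic_model_def q_def r_def by simp
  have D: "\<bar>g \<bullet> s\<bar> \<le> d * r" "d \<ge> 0" using dual_bound[OF assms(1), of g s] unfolding d_def r_def by auto
  have Rb: "\<bar>q\<bar> \<le> R * r^2" "R \<ge> 0" using rnorm_bound[OF assms(1), of H s] unfolding R_def r_def q_def by auto
  have Lb: "L * r^2 \<le> q" using lambda_bound[OF assms(1), of H s] unfolding L_def r_def q_def by auto
  have g1: "- (g \<bullet> s) \<le> d * r" using D(1) by linarith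
  have q1: "- q \<le> R * r^2" using Rb(1) by linarith
  have c3: "\<sigma>/6 * r^3 \<ge> 0" using r0 assms(3) by simp
  have p1: "r \<le> ((1/2) * R + sqrt (R^2 + (2/3) * \<sigma> * d)) / ((1/3) * \<sigma>)"
  proof (rule arith1[OF assms(3) r0 D(2) Rb(2)])
    show "\<sigma>/6 * r^3 \<le> d * r + R/2 * r^2" using key assms(4) g1 q1 by linarith
  qed
  have p2: "L < 0 \<longrightarrow> r \<ge> (sqrt (d^2 + 2 * \<beta> * \<bar>L\<bar>) - d) / \<bar>L\<bar>"
  proof
    assume "L < 0"
    then have "\<bar>L\<bar> > 0" "\<bar>L\<bar> = -L" by auto
    moreover have "\<beta> \<le> d * r + \<bar>L\<bar>/2 * r^2" proof -
      have "\<bar>L\<bar>/2 * r^2 = -(L * r^2)/2" using \<open>\<bar>L\<bar> = -L\<close> by simp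
      then show ?thesis using key g1 Lb c3 by linarith
    qed
    ultimately show "r \<ge> (sqrt (d^2 + 2 * \<beta> * \<bar>L\<bar>) - d) / \<bar>L\<bar>" using arith2[OF _ r0 D(2)] by blast
  qed
  have p3: "\<beta> > 0 \<longrightarrow> L \<ge> 0 \<longrightarrow> g \<noteq> 0 \<and> r \<ge> \<beta> / d"
  proof (intro impI)
    assume b: "\<beta> > 0" and l: "L \<ge> 0"
    have "L * r^2 \<ge> 0" using l by simp
    then have kb: "\<beta> \<le> - (g \<bullet> s)" using key Lb c3 by linarith
    have "g \<noteq> 0" proof assume "g = 0" then show False using kb b by simp qed
    moreover have "\<beta> \<le> d * r" using kb D by linarith
    then have "d > 0" using b r0 D(2) by (metis less_eq_real_def mult_zero_left not_less)
    then have "r \<ge> \<beta> / d" using \<open>\<beta> \<le> d * r\<close> by (simp add: divide_le_eq mult.commute)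
    ultimately show "g \<noteq> 0 \<and> r \<ge> \<beta> / d" by blast
  qed
  show ?thesis using p1 p2 p3 unfolding r_def d_def R_def L_def by blast
qed

end
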